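(* Let $G$ be a connected $(2K_2, HVN)$-free graph. Then either $G$ is $(2K_2,\text{diamond})$-free, or there exists a partition $(V_1,V_2,V_3,V_4)$ of $V(G)$ (parts possibly empty) such that (i) $G[V_1]$ is a $(2K_2,\text{paw})$-free graph with $\omega(G[V_1])\le\omega(G)-1$, and (ii) $V_i$ is an independent set for each $i\in\{2,3,4\}$.
   Context: All graphs are finite, simple and undirected. $2K_2$ is the disjoint union of two edges. A diamond is $K_4$ minus an edge. A paw is the graph on $\{a,b,c,d\}$ with edges $ab,bc,ac,ad$. $HVN$ is the graph $K_1+\text{paw}$, i.e., a $K_4$ together with one further vertex adjacent to exactly two vertices of the $K_4$. A graph is $\mathcal F$-free if it has no induced subgraph isomorphic to a member of $\mathcal F$. $G[S]$ is the subgraph induced by $S$; $\omega$ is the clique number. *)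

theory Defs
  imports Main
begin

definition simple_graph :: "'a set \<Rightarrow> ('a \<Rightarrow> 'a \<Rightarrow> bool) \<Rightarrow> bool" where
  "simple_graph V E \<longleftrightarrow> finite V \<and> (\<forall>x y. E x y \<longrightarrow> x \<in> V \<and> y \<in> V)
     \<and> (\<forall>x y. E x y \<longrightarrow> E y x) \<and> (\<forall>x. \<not> E x x)"

text \<open>Induced subgraph G[S] is (S, E restricted to S). G[S] contains an induced copy of
  the pattern graph (HV, HE) iff there is an injection of HV into S preserving adjacency and
  non-adjacency.\<close>
definition has_induced :: "'b set \<Rightarrow> ('b \<Rightarrow> 'b \<Rightarrow> bool) \<Rightarrow> 'a set \<Rightarrow> ('a \<Rightarrow> 'a \<Rightarrow> bool) \<Rightarrow> bool" where
  "has_induced HV HE S E \<longleftrightarrow> (\<exists>f. inj_on f HV \<and> f ` HV \<subseteq> S \<and>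
      (\<forall>x\<in>HV. \<forall>y\<in>HV. HE x y \<longleftrightarrow> E (f x) (f y)))"

definition edges_of :: "(nat \<times> nat) list \<Rightarrow> nat \<Rightarrow> nat \<Rightarrow> bool" where
  "edges_of L x y \<longleftrightarrow> (x, y) \<in> set L \<or> (y, x) \<in> set L"

definition twoK2_E :: "nat \<Rightarrow> nat \<Rightarrow> bool" where
  "twoK2_E = edges_of [(0,1),(2,3)]"

definition diamond_E :: "nat \<Rightarrow> nat \<Rightarrow> bool" where
  "diamond_E = edges_of [(0,1),(0,2),(0,3),(1,2),(1,3)]"

definition paw_E :: "nat \<Rightarrow> nat \<Rightarrow> bool" where
  "paw_E = edges_of [(0,1),(1,2),(0,2),(0,3)]"

text \<open>HVN: K4 on {0,1,2,3} plus vertex 4 adjacent to exactly 0 and 1.\<close>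
definition HVN_E :: "nat \<Rightarrow> nat \<Rightarrow> bool" where
  "HVN_E = edges_of [(0,1),(0,2),(0,3),(1,2),(1,3),(2,3),(4,0),(4,1)]"

definition twoK2_free :: "'a set \<Rightarrow> ('a \<Rightarrow> 'a \<Rightarrow> bool) \<Rightarrow> bool" where
  "twoK2_free S E \<longleftrightarrow> \<not> has_induced {0..<4::nat} twoK2_E S E"

definition diamond_free :: "'a set \<Rightarrow> ('a \<Rightarrow> 'a \<Rightarrow> bool) \<Rightarrow> bool" where
  "diamond_free S E \<longleftrightarrow> \<not> has_induced {0..<4::nat} diamond_E S E"

definition paw_free :: "'a set \<Rightarrow> ('a \<Rightarrow> 'a \<Rightarrow> bool) \<Rightarrow> bool" where
  "paw_free S E \<longleftrightarrow> \<not> has_induced {0..<4::nat} paw_E S E"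

definition HVN_free :: "'a set \<Rightarrow> ('a \<Rightarrow> 'a \<Rightarrow> bool) \<Rightarrow> bool" where
  "HVN_free S E \<longleftrightarrow> \<not> has_induced {0..<5::nat} HVN_E S E"

definition is_clique :: "('a \<Rightarrow> 'a \<Rightarrow> bool) \<Rightarrow> 'a set \<Rightarrow> bool" where
  "is_clique E K \<longleftrightarrow> (\<forall>x\<in>K. \<forall>y\<in>K. x \<noteq> y \<longrightarrow> E x y)"

definition independent :: "('a \<Rightarrow> 'a \<Rightarrow> bool) \<Rightarrow> 'a set \<Rightarrow> bool" where
  "independent E I \<longleftrightarrow> (\<forall>x\<in>I. \<forall>y\<in>I. \<not> E x y)"

text \<open>Clique number of G[S] (S finite).\<close>
definition clique_number :: "'a set \<Rightarrow> ('a \<Rightarrow> 'a \<Rightarrow> bool) \<Rightarrow> nat" where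
  "clique_number S E = Max {card K | K. K \<subseteq> S \<and> is_clique E K}"

text \<open>Connected: any two vertices joined by a walk in G (the empty graph counts as connected).\<close>
definition connected_graph :: "'a set \<Rightarrow> ('a \<Rightarrow> 'a \<Rightarrow> bool) \<Rightarrow> bool" where
  "connected_graph V E \<longleftrightarrow> (\<forall>u\<in>V. \<forall>v\<in>V. (\<lambda>x y. E x y \<and> x \<in> V \<and> y \<in> V)\<^sup>*\<^sup>* u v)"

end

theory Submission
  imports Defs
begin

lemma four_eq: "{0..<4::nat} = {0,1,2,3}" by auto
lemma five_eq: "{0..<5::nat} = {0,1,2,3,4}" by auto

lemma no2K2:
  assumes sg: "simple_graph V E" and fr: "twoK2_free V E"
   and V: "x\<in>V" "y\<in>V" "u\<in>V" "w\<in>V"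
   and e: "E x y" "E u w"
   and n: "\<not>E x u" "\<not>E x w" "\<not>E y u" "\<not>E y w"
   and d: "x\<noteq>y" "x\<noteq>u" "x\<noteq>w" "y\<noteq>u" "y\<noteq>w" "u\<noteq>w"
  shows False
proof -
  have sym: "\<And>p q. E p q \<Longrightarrow> E q p" and irr: "\<And>p. \<not> E p p"
    using sg unfolding simple_graph_def by auto
  have e2: "E y x" "E w u" using e sym by auto
  have n2: "\<not>E u x" "\<not>E w x" "\<not>E u y" "\<not>E w y" using n sym by auto
  have i: "\<not>E x x" "\<not>E y y" "\<not>E u u" "\<not>E w w" using irr by auto
  let ?f = "\<lambda>i::nat. if i=0 then x else if i=1 then y else if i=2 then u else w"
  have "has_induced {0..<4::nat} twoK2_E V E"
    unfolding has_induced_def four_eq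
    apply (rule exI[of _ ?f])
    apply (intro conjI)
    subgoal using d by (simp add: inj_on_def)
    subgoal using V by simp
    subgoal using e e2 n n2 i by (simp add: twoK2_E_def edges_of_def)
    done
  with fr show False unfolding twoK2_free_def by simp
qed

lemma noHVN:
  assumes sg: "simple_graph V E" and fr: "HVN_free V E"
   and V: "s\<in>V" "t\<in>V" "u\<in>V" "w\<in>V" "x\<in>V"
   and e: "E s t" "E s u" "E s w" "E t u" "E t w" "E u w" "E x s" "E x t"
   and n: "\<not>E x u" "\<not>E x w"
   and d: "s\<noteq>t" "s\<noteq>u" "s\<noteq>w" "s\<noteq>x" "t\<noteq>u" "t\<noteq>w" "t\<noteq>x" "u\<noteq>w" "u\<noteq>x" "w\<noteq>x"
  shows False
proof -
  have sym: "\<And>p q. E p q \<Longrightarrow> E q p" and irr: "\<And>p. \<not> E p p"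
    using sg unfolding simple_graph_def by auto
  have e2: "E t s" "E u s" "E w s" "E u t" "E w t" "E w u" "E s x" "E t x" using e sym by auto
  have n2: "\<not>E u x" "\<not>E w x" using n sym by auto
  have i: "\<not>E x x" "\<not>E s s" "\<not>E t t" "\<not>E u u" "\<not>E w w" using irr by auto
  let ?f = "\<lambda>i::nat. if i=0 then s else if i=1 then t else if i=2 then u else if i=3 then w else x"
  have "has_induced {0..<5::nat} HVN_E V E"
    unfolding has_induced_def five_eq
    apply (rule exI[of _ ?f])
    apply (intro conjI)
    subgoal using d by (simp add: inj_on_def)
    subgoal using V by simp
    subgoal using e e2 n n2 i by (simp add: HVN_E_def edges_of_def)
    done
  with fr show False unfolding HVN_free_def by simp
qed

lemma clique_fin: "finite S \<Longrightarrow> finite {card K | K. K \<subseteq> S \<and> is_clique E K}"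
proof -
  assume "finite S"
  moreover have "{card K | K. K \<subseteq> S \<and> is_clique E K} \<subseteq> card ` Pow S" by auto
  ultimately show ?thesis using finite_subset by blast
qed

lemma clique_le: "finite S \<Longrightarrow> K \<subseteq> S \<Longrightarrow> is_clique E K \<Longrightarrow> card K \<le> clique_number S E"
  unfolding clique_number_def by (rule Max_ge) (auto intro: clique_fin)

lemma clique_ex: "finite S \<Longrightarrow> \<exists>K. K \<subseteq> S \<and> is_clique E K \<and> card K = clique_number S E"
proof -
  assume f: "finite S"
  have "{} \<subseteq> S \<and> is_clique E {}" by (simp add: is_clique_def)
  hence "clique_number S E \<in> {card K | K. K \<subseteq> S \<and> is_clique E K}"
    unfolding clique_number_def using clique_fin[OF f] by (intro Max_in) auto
  thus ?thesis by auto
qed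

lemma clique_number_le:
  assumes "finite S" "\<And>K. K \<subseteq> S \<Longrightarrow> is_clique E K \<Longrightarrow> card K \<le> n"
  shows "clique_number S E \<le> n"
proof -
  obtain K where "K \<subseteq> S" "is_clique E K" "card K = clique_number S E" using clique_ex[OF assms(1)] by blast
  thus ?thesis using assms(2) by metis
qed

lemma twoK2_mono: "S \<subseteq> V \<Longrightarrow> twoK2_free V E \<Longrightarrow> twoK2_free S E"
  unfolding twoK2_free_def has_induced_def by (meson subset_trans)

lemma pick2: assumes "finite S" "2 \<le> card S" shows "\<exists>s t. s\<in>S \<and> t\<in>S \<and> s\<noteq>t"
proof -
  have "\<not> card S \<le> Suc 0" using assms(2) by simp
  thus ?thesis using card_le_Suc0_iff_eq[OF assms(1)] by blast
qed

theorem theorem3p7: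
  fixes V :: "'a set" and E :: "'a \<Rightarrow> 'a \<Rightarrow> bool"
  assumes "simple_graph V E"
    and "connected_graph V E"
    and "twoK2_free V E"
    and "HVN_free V E"
  shows "(twoK2_free V E \<and> diamond_free V E) \<or>
    (\<exists>V1 V2 V3 V4.
        V1 \<union> V2 \<union> V3 \<union> V4 = V \<and>
        V1 \<inter> V2 = {} \<and> V1 \<inter> V3 = {} \<and> V1 \<inter> V4 = {} \<and>
        V2 \<inter> V3 = {} \<and> V2 \<inter> V4 = {} \<and> V3 \<inter> V4 = {} \<and>
        twoK2_free V1 E \<and> paw_free V1 E \<and>
        clique_number V1 E \<le> clique_number V E - 1 \<and>
        independent E V2 \<and> independent E V3 \<and> independent E V4)"
proof -
  have fin: "finite V" and sym: "\<And>x y. E x y \<Longrightarrow> E y x" and irr: "\<And>x. \<not> E x x"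
    and inV: "\<And>x y. E x y \<Longrightarrow> x \<in> V"
    using assms(1) unfolding simple_graph_def by auto
  define \<omega> where "\<omega> = clique_number V E"
  obtain Q where Q: "Q \<subseteq> V" "is_clique E Q" "card Q = \<omega>"
    using clique_ex[OF fin] \<omega>_def by metis
  have cle: "\<And>K. K \<subseteq> V \<Longrightarrow> is_clique E K \<Longrightarrow> card K \<le> \<omega>"
    using clique_le[OF fin] \<omega>_def by auto
  have finQ: "finite Q" using Q(1) fin finite_subset by auto
  have QE: "\<And>p q. p\<in>Q \<Longrightarrow> q\<in>Q \<Longrightarrow> p\<noteq>q \<Longrightarrow> E p q" using Q(2) unfolding is_clique_def by auto
  consider "\<omega> \<le> 2" | "\<omega> = 3" | "\<omega> \<ge> 4" by linarith
  then show ?thesis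
  proof cases
    case 1
    have "diamond_free V E"
    proof (unfold diamond_free_def, rule notI)
      assume "has_induced {0..<4::nat} diamond_E V E"
      then obtain f where f: "inj_on f {0..<4::nat}" "f ` {0..<4} \<subseteq> V"
        "\<forall>x\<in>{0..<4}. \<forall>y\<in>{0..<4}. diamond_E x y \<longleftrightarrow> E (f x) (f y)"
        unfolding has_induced_def by blast
      have e: "\<And>i j. i<4 \<Longrightarrow> j<4 \<Longrightarrow> diamond_E i j = E (f i) (f j)" using f(3) by auto
      have e1: "E (f 0) (f 1)" "E (f 0) (f 2)" "E (f 1) (f 2)"
        using e[of 0 1] e[of 0 2] e[of 1 2] by (simp_all add: diamond_E_def edges_of_def)
      have "is_clique E {f 0, f 1, f 2}" using e1 sym unfolding is_clique_def by auto
      moreover have c3: "card {f 0, f 1, f 2} = 3" using e1 irr by (auto simp: card_insert_if)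
      moreover have "{f 0, f 1, f 2} \<subseteq> V" using f(2) by auto
      ultimately have "card {f 0, f 1, f 2} \<le> \<omega>" using cle by blast
      with 1 c3 show False by simp
    qed
    thus ?thesis using assms(3) by blast
  next
    case 2
    from Q(3) 2 obtain a b c where abc: "Q = {a,b,c}" "a\<noteq>b" "b\<noteq>c" "a\<noteq>c"
      by (auto simp: card_3_iff)
    have eab: "E a b" "E a c" "E b c" using QE abc by auto
    have aV: "a \<in> V" "b \<in> V" "c \<in> V" using Q(1) abc by auto
    define V1 where "V1 = {x\<in>V. E a x}"
    define V2 where "V2 = {x\<in>V. \<not>E a x \<and> (x = a \<or> \<not>E b x)}"
    define V3 where "V3 = {x\<in>V. \<not>E a x \<and> x \<noteq> a \<and> E b x \<and> \<not>E c x}"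
    define V4 where "V4 = {x\<in>V. \<not>E a x \<and> x \<noteq> a \<and> E b x \<and> E c x}"
    have part: "V1 \<union> V2 \<union> V3 \<union> V4 = V" "V1 \<inter> V2 = {}" "V1 \<inter> V3 = {}" "V1 \<inter> V4 = {}"
        "V2 \<inter> V3 = {}" "V2 \<inter> V4 = {}" "V3 \<inter> V4 = {}"
      unfolding V1_def V2_def V3_def V4_def by auto
    have i2: "independent E V2" unfolding independent_def
    proof (intro ballI notI)
      fix x y assume x: "x\<in>V2" and y: "y\<in>V2" and xy: "E x y"
      show False
      proof (cases "x = a \<or> y = a")
        case True then show False using x y xy sym unfolding V2_def by blast
      next
        case False
        then have h: "x\<in>V" "y\<in>V" "\<not>E a x" "\<not>E a y" "\<not>E b x" "\<not>E b y" "x\<noteq>a" "y\<noteq>a"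
          using x y unfolding V2_def by auto
        show False
          apply (rule no2K2[OF assms(1,3) h(1,2) aV(1,2) xy eab(1)])
          using h eab xy irr sym by metis+
      qed
    qed
    have i3: "independent E V3" unfolding independent_def
    proof (intro ballI notI)
      fix x y assume x: "x\<in>V3" and y: "y\<in>V3" and xy: "E x y"
      have h: "x\<in>V" "y\<in>V" "\<not>E a x" "\<not>E a y" "\<not>E c x" "\<not>E c y" "x\<noteq>a" "y\<noteq>a"
        using x y unfolding V3_def by auto
      show False
        apply (rule no2K2[OF assms(1,3) h(1,2) aV(1,3) xy eab(2)])
        using h eab xy irr sym by metis+
    qed
    have i4: "independent E V4" unfolding independent_def
    proof (intro ballI notI)
      fix x y assume x: "x\<in>V4" and y: "y\<in>V4" and xy: "E x y"
      have h: "x\<in>V" "y\<in>V" "E b x" "E b y" "E c x" "E c y"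
        using x y unfolding V4_def by auto
      have d: "x \<noteq> y" "x \<noteq> b" "x \<noteq> c" "y \<noteq> b" "y \<noteq> c" using h xy irr by metis+
      have "is_clique E {x,y,b,c}" using h xy eab sym unfolding is_clique_def by auto
      moreover have "{x,y,b,c} \<subseteq> V" using h aV by auto
      ultimately have "card {x,y,b,c} \<le> \<omega>" using cle by blast
      moreover have "card {x,y,b,c} = 4" using d abc by auto
      ultimately show False using 2 by simp
    qed
    have fin1: "finite V1" using fin unfolding V1_def by auto
    have cl1: "clique_number V1 E \<le> \<omega> - 1"
    proof (rule clique_number_le[OF fin1])
      fix K assume K: "K \<subseteq> V1" "is_clique E K"
      have finK: "finite K" using K(1) fin1 finite_subset by auto
      have aK: "a \<notin> K" using K(1) irr unfolding V1_def by auto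
      have "is_clique E (insert a K)" using K sym unfolding is_clique_def V1_def by auto
      moreover have "insert a K \<subseteq> V" using K(1) aV unfolding V1_def by auto
      ultimately have "card (insert a K) \<le> 3" using cle 2 by blast
      thus "card K \<le> \<omega> - 1" using aK finK 2 by simp
    qed
    have p1: "paw_free V1 E"
    proof (unfold paw_free_def, rule notI)
      assume "has_induced {0..<4::nat} paw_E V1 E"
      then obtain f where f: "inj_on f {0..<4::nat}" "f ` {0..<4} \<subseteq> V1"
        "\<forall>x\<in>{0..<4}. \<forall>y\<in>{0..<4}. paw_E x y \<longleftrightarrow> E (f x) (f y)"
        unfolding has_induced_def by blast
      have e: "\<And>i j. i<4 \<Longrightarrow> j<4 \<Longrightarrow> paw_E i j = E (f i) (f j)" using f(3) by auto
      have e1: "E (f 0) (f 1)" "E (f 0) (f 2)" "E (f 1) (f 2)"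
        using e[of 0 1] e[of 0 2] e[of 1 2] by (simp_all add: paw_E_def edges_of_def)
      have fv: "f 0 \<in> V1" "f 1 \<in> V1" "f 2 \<in> V1" using f(2) by auto
      hence ea: "E a (f 0)" "E a (f 1)" "E a (f 2)" "f 0 \<in> V" "f 1 \<in> V" "f 2 \<in> V"
        unfolding V1_def by auto
      have "is_clique E {a, f 0, f 1, f 2}" using e1 ea sym unfolding is_clique_def by auto
      moreover have "{a, f 0, f 1, f 2} \<subseteq> V" using ea aV by auto
      ultimately have "card {a, f 0, f 1, f 2} \<le> \<omega>" using cle by blast
      moreover have "card {a, f 0, f 1, f 2} = 4" using e1 ea irr by (auto simp: card_insert_if)
      ultimately show False using 2 by simp
    qed
    have "V1 \<subseteq> V" unfolding V1_def by auto
    hence t1: "twoK2_free V1 E" using twoK2_mono[OF _ assms(3)] by blast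
    show ?thesis
      apply (rule disjI2)
      apply (rule exI[of _ V1], rule exI[of _ V2], rule exI[of _ V3], rule exI[of _ V4])
      unfolding \<omega>_def[symmetric]
      apply (intro conjI)
      by (rule part t1 p1 cl1 i2 i3 i4)+
  next
    case 3
    obtain q1 where q1: "q1 \<in> Q" using Q(3) 3 by (metis card.empty ex_in_conv not_numeral_le_zero)
    have notfull: "\<exists>u\<in>Q. \<not>E x u" if x: "x\<in>V" "x\<notin>Q" for x
    proof (rule ccontr)
      assume nx: "\<not>(\<exists>u\<in>Q. \<not>E x u)"
      have "is_clique E (insert x Q)" using nx QE sym unfolding is_clique_def by auto
      moreover have "insert x Q \<subseteq> V" using x Q(1) by auto
      ultimately have "card (insert x Q) \<le> \<omega>" using cle by blast
      then show False using x(2) finQ Q(3) by simp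
    qed
    have factA: False if h: "x\<in>V" "s\<in>Q" "t\<in>Q" "u\<in>Q" "w\<in>Q" "s\<noteq>t" "u\<noteq>w"
        "E x s" "E x t" "\<not>E x u" "\<not>E x w" for x s t u w
    proof (cases "x\<in>Q")
      case True then show False using h QE by metis
    next
      case False
      have V: "s\<in>V" "t\<in>V" "u\<in>V" "w\<in>V" using h Q(1) by auto
      have d: "s\<noteq>u" "s\<noteq>w" "t\<noteq>u" "t\<noteq>w" "s\<noteq>x" "t\<noteq>x" "u\<noteq>x" "w\<noteq>x"
        using h False by metis+
      show False
        apply (rule noHVN[OF assms(1,4) V h(1)])
        using QE h d by metis+
    qed
    have two_in: "\<exists>s t. s\<in>Q - A \<and> t\<in>Q - A \<and> s\<noteq>t" if A: "A \<subseteq> Q" "card A \<le> 2" for A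
    proof -
      have "finite A" using A(1) finQ finite_subset by auto
      hence "card (Q - A) = \<omega> - card A" using card_Diff_subset A(1) Q(3) by metis
      hence "2 \<le> card (Q - A)" using A(2) 3 by linarith
      thus ?thesis using pick2 finQ by blast
    qed
    have cardQ1: "card (Q - {q1}) = \<omega> - 1" using q1 finQ Q(3) by simp
    define V2 where "V2 = {x\<in>V. \<forall>s\<in>Q. \<forall>t\<in>Q. E x s \<longrightarrow> E x t \<longrightarrow> s = t}"
    define V3 where "V3 = {x\<in>V. \<not>E x q1 \<and> (\<forall>q\<in>Q-{q1}. E x q)}"
    define V1 where "V1 = V - V2 - V3"
    have d23: "V2 \<inter> V3 = {}"
    proof (rule ccontr)
      assume "V2 \<inter> V3 \<noteq> {}"
      then obtain x where x: "x \<in> V2" "x \<in> V3" by blast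
      obtain s t where st: "s\<in>Q - {q1}" "t\<in>Q - {q1}" "s\<noteq>t" using two_in[of "{q1}"] q1 by auto
      show False using x st unfolding V2_def V3_def by blast
    qed
    have part: "V1 \<union> V2 \<union> V3 \<union> {} = V" "V1 \<inter> V2 = {}" "V1 \<inter> V3 = {}" "V1 \<inter> {} = {}"
        "V2 \<inter> V3 = {}" "V2 \<inter> {} = {}" "V3 \<inter> {} = {}"
      using d23 unfolding V1_def V2_def V3_def by auto
    have i4: "independent E {}" unfolding independent_def by simp
    have i2: "independent E V2" unfolding independent_def
    proof (intro ballI notI)
      fix x y assume x: "x\<in>V2" and y: "y\<in>V2" and xy: "E x y"
      have nQ: "z \<notin> Q" if z: "z \<in> V2" for z
      proof
        assume zQ: "z \<in> Q"
        obtain s t where st: "s\<in>Q - {z}" "t\<in>Q - {z}" "s\<noteq>t" using two_in[of "{z}"] zQ by auto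
        show False using z st QE zQ unfolding V2_def by blast
      qed
      have c1: "card {q\<in>Q. E v q} \<le> 1" if "v \<in> V2" for v
      proof -
        have fv: "finite {q\<in>Q. E v q}" using finQ by simp
        have "card {q\<in>Q. E v q} \<le> Suc 0" using that unfolding V2_def
          by (subst card_le_Suc0_iff_eq[OF fv]) auto
        thus ?thesis by simp
      qed
      have "card ({q\<in>Q. E x q} \<union> {q\<in>Q. E y q}) \<le> 2"
        using c1[OF x] c1[OF y] card_Un_le[of "{q\<in>Q. E x q}" "{q\<in>Q. E y q}"] by linarith
      then obtain s t where st: "s\<in>Q - ({q\<in>Q. E x q} \<union> {q\<in>Q. E y q})"
          "t\<in>Q - ({q\<in>Q. E x q} \<union> {q\<in>Q. E y q})" "s\<noteq>t"
        using two_in[of "{q\<in>Q. E x q} \<union> {q\<in>Q. E y q}"] by blast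
      have h0: "x\<in>V" "y\<in>V" using x y unfolding V2_def by auto
      have h: "x\<in>V" "y\<in>V" "s\<in>V" "t\<in>V" "x\<notin>Q" "y\<notin>Q" "s\<in>Q" "t\<in>Q"
        using h0 st nQ[OF x] nQ[OF y] Q(1) by auto
      show False
        apply (rule no2K2[OF assms(1,3) h(1-4) xy QE[OF h(7,8) st(3)]])
        using st(1,2,3) h(5-8) xy irr by (blast | metis)+
    qed
    have i3: "independent E V3" unfolding independent_def
    proof (intro ballI notI)
      fix x y assume x: "x\<in>V3" and y: "y\<in>V3" and xy: "E x y"
      have xy': "x \<noteq> y" using xy irr by metis
      have xn: "x \<notin> Q - {q1}" "y \<notin> Q - {q1}" using x y irr unfolding V3_def by auto
      have "is_clique E (insert x (insert y (Q - {q1})))"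
        using x y xy QE sym unfolding V3_def is_clique_def by auto
      moreover have "insert x (insert y (Q - {q1})) \<subseteq> V" using x y Q(1) unfolding V3_def by auto
      ultimately have "card (insert x (insert y (Q - {q1}))) \<le> \<omega>" using cle by blast
      moreover have "card (insert x (insert y (Q - {q1}))) = \<omega> + 1"
        using xn xy' finQ cardQ1 3 by simp
      ultimately show False by simp
    qed
    define nu where "nu x = (SOME u. u\<in>Q \<and> \<not>E x u)" for x
    have nuP: "nu x \<in> Q \<and> \<not>E x (nu x) \<and> (\<forall>q\<in>Q. \<not>E x q \<longrightarrow> q = nu x) \<and> nu x \<noteq> q1"
      if x: "x\<in>V1" for x
    proof -
      have xV: "x\<in>V" and xn2: "x\<notin>V2" and xn3: "x\<notin>V3" using x unfolding V1_def by auto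
      have ex: "\<exists>u. u\<in>Q \<and> \<not>E x u"
      proof (cases "x\<in>Q")
        case True then show ?thesis using irr by blast
      next
        case False then show ?thesis using notfull[OF xV] by blast
      qed
      hence n: "nu x \<in> Q \<and> \<not>E x (nu x)" unfolding nu_def by (rule someI_ex)
      from xn2 xV obtain s t where st: "s\<in>Q" "t\<in>Q" "E x s" "E x t" "s\<noteq>t" unfolding V2_def by auto
      have uniq: "\<forall>q\<in>Q. \<not>E x q \<longrightarrow> q = nu x"
      proof (intro ballI impI)
        fix q assume "q\<in>Q" "\<not>E x q"
        then show "q = nu x" using factA[OF xV st(1,2) _ _ st(5) _ st(3,4)] n by metis
      qed
      have "nu x \<noteq> q1"
      proof
        assume "nu x = q1"
        hence "x \<in> V3" using uniq n xV unfolding V3_def by auto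
        thus False using xn3 by simp
      qed
      thus ?thesis using n uniq by blast
    qed
    have V1V: "V1 \<subseteq> V" unfolding V1_def by auto
    have inQ: "x = nu x" if "x\<in>V1" "x\<in>Q" for x using nuP[OF that(1)] that irr by metis
    have adjQ: "E x q" if "x\<in>V1" "q\<in>Q" "q \<noteq> nu x" for x q using nuP[OF that(1)] that by metis
    have K1: "E x y \<longleftrightarrow> nu x \<noteq> nu y" if x: "x\<in>V1" and y: "y\<in>V1" for x y
    proof
      assume xy: "E x y"
      show "nu x \<noteq> nu y"
      proof
        assume eq: "nu x = nu y"
        have xy': "x \<noteq> y" using xy irr by metis
        show False
        proof (cases "x \<in> Q \<or> y \<in> Q")
          case True
          then show False using inQ[OF x] inQ[OF y] nuP[OF x] nuP[OF y] eq xy sym by metis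
        next
          case False
          have xn: "x \<notin> Q - {nu x}" "y \<notin> Q - {nu x}" using False by auto
          have "is_clique E (insert x (insert y (Q - {nu x})))"
            using adjQ[OF x] adjQ[OF y] eq xy QE sym unfolding is_clique_def by auto
          moreover have "insert x (insert y (Q - {nu x})) \<subseteq> V" using x y V1V Q(1) by auto
          ultimately have "card (insert x (insert y (Q - {nu x}))) \<le> \<omega>" using cle by blast
          moreover have "card (Q - {nu x}) = \<omega> - 1" using nuP[OF x] finQ Q(3) by simp
          hence "card (insert x (insert y (Q - {nu x}))) = \<omega> + 1"
            using xn xy' finQ 3 by simp
          ultimately show False by simp
        qed
      qed
    next
      assume ne: "nu x \<noteq> nu y"
      show "E x y"
      proof (rule ccontr)
        assume nxy: "\<not> E x y"
        show False
        proof (cases "x \<in> Q \<or> y \<in> Q")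
          case True
          then show False using inQ[OF x] inQ[OF y] adjQ[OF x] adjQ[OF y] ne nxy sym by metis
        next
          case False
          have xy': "x \<noteq> y" using ne by auto
          have nyQ: "nu y \<in> Q" and nxQ: "nu x \<in> Q" using nuP[OF y] nuP[OF x] by blast+
          have sub: "{nu x, nu y} \<subseteq> Q" using nxQ nyQ by blast
          have c2: "card {nu x, nu y} \<le> 2" using ne by simp
          obtain s t where st: "s\<in>Q - {nu x, nu y}" "t\<in>Q - {nu x, nu y}" "s\<noteq>t"
            using two_in[OF sub c2] by blast
          have sQ: "s \<in> Q" "s \<noteq> nu x" "s \<noteq> nu y" "t \<in> Q" "t \<noteq> nu x" "t \<noteq> nu y"
            using st by auto
          have V: "s\<in>V" "t\<in>V" "x\<in>V" "nu y \<in> V" "y\<in>V" using sQ nyQ x y V1V Q(1) by auto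
          have e: "E s t" "E s x" "E s (nu y)" "E t x" "E t (nu y)" "E x (nu y)" "E y s" "E y t"
            using QE[OF sQ(1,4) st(3)] sym[OF adjQ[OF x sQ(1,2)]] QE[OF sQ(1) nyQ sQ(3)]
              sym[OF adjQ[OF x sQ(4,5)]] QE[OF sQ(4) nyQ sQ(6)] adjQ[OF x nyQ] ne
              adjQ[OF y sQ(1,3)] adjQ[OF y sQ(4,6)] by auto
          have n: "\<not> E y x" "\<not> E y (nu y)" using nxy sym nuP[OF y] by metis+
          have d: "s\<noteq>t" "s\<noteq>x" "s\<noteq>nu y" "s\<noteq>y" "t\<noteq>x" "t\<noteq>nu y" "t\<noteq>y" "x\<noteq>nu y" "x\<noteq>y" "nu y\<noteq>y"
            using sQ st(3) False nyQ xy' by auto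
          show False by (rule noHVN[OF assms(1,4) V e n d])
        qed
      qed
    qed
    have p1: "paw_free V1 E"
    proof (unfold paw_free_def, rule notI)
      assume "has_induced {0..<4::nat} paw_E V1 E"
      then obtain f where f: "inj_on f {0..<4::nat}" "f ` {0..<4} \<subseteq> V1"
        "\<forall>x\<in>{0..<4}. \<forall>y\<in>{0..<4}. paw_E x y \<longleftrightarrow> E (f x) (f y)"
        unfolding has_induced_def by blast
      have e: "\<And>i j. i<4 \<Longrightarrow> j<4 \<Longrightarrow> paw_E i j = E (f i) (f j)" using f(3) by auto
      have e1: "E (f 1) (f 2)" "\<not> E (f 1) (f 3)" "\<not> E (f 2) (f 3)"
        using e[of 1 2] e[of 1 3] e[of 2 3] by (simp_all add: paw_E_def edges_of_def)
      have fv: "f 1 \<in> V1" "f 2 \<in> V1" "f 3 \<in> V1" using f(2) by auto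
      show False using e1 K1[OF fv(1,2)] K1[OF fv(1,3)] K1[OF fv(2,3)] by simp
    qed
    have fin1: "finite V1" using fin V1V finite_subset by auto
    have cl1: "clique_number V1 E \<le> \<omega> - 1"
    proof (rule clique_number_le[OF fin1])
      fix K assume K: "K \<subseteq> V1" "is_clique E K"
      have finK: "finite K" using K(1) fin1 finite_subset by auto
      have "inj_on nu K"
      proof (rule inj_onI)
        fix x y assume "x\<in>K" "y\<in>K" "nu x = nu y"
        thus "x = y" using K K1 unfolding is_clique_def by blast
      qed
      hence "card K = card (nu ` K)" by (simp add: card_image)
      also have "\<dots> \<le> card (Q - {q1})"
        using K(1) nuP finQ by (intro card_mono) auto
      finally show "card K \<le> \<omega> - 1" using cardQ1 by simp
    qed
    have t1: "twoK2_free V1 E" using twoK2_mono[OF V1V assms(3)] .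
    show ?thesis
      apply (rule disjI2)
      apply (rule exI[of _ V1], rule exI[of _ V2], rule exI[of _ V3], rule exI[of _ "{}"])
      unfolding \<omega>_def[symmetric]
      apply (intro conjI)
      by (rule part t1 p1 cl1 i2 i3 i4)+
  qed
qed

end
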